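(* Let $r,K,q\in\mathbb{Z}_{++}$, $A\in\mathbb{R}^{r\times r}$ and $V\in\mathbb{R}^{q\times r}$. Let $U,\tilde U\in\mathbb{R}^{r\times K}$ be matrices each of whose columns has Euclidean norm at most $1$. Define $F(U)=\mathrm{Clip}\big(VU\,\mathrm{Softmax}(U^\top AU/\sqrt r)\big)$. Then $$\|F(U)-F(\tilde U)\|_F^2\le 2K\|V\|_\sigma^2\Big(1+\frac{4K\|A\|_\sigma^2}{r}\Big)\|U-\tilde U\|_F^2 .$$
   Context: $\mathrm{Softmax}$ is applied to each column of the $K\times K$ matrix separately. $\mathrm{Clip}$ maps each column $c$ of its matrix argument to $c/\max\{1,\|c\|_2\}$. $\|\cdot\|_\sigma$ is the operator (spectral) norm and $\|\cdot\|_F$ the Frobenius norm. *)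

theory Defs
  imports "HOL-Analysis.Analysis"
begin

text \<open>Matrices are type-indexed: a matrix in R^(m x n) is real^'n^'m (rows 'm, columns 'n).\<close>

definition fro_norm :: "real^'n^'m \<Rightarrow> real" where
  "fro_norm M = sqrt (\<Sum>i\<in>UNIV. \<Sum>j\<in>UNIV. (M $ i $ j)^2)"

definition op_norm :: "real^'n^'m \<Rightarrow> real" where
  "op_norm M = onorm (\<lambda>x. M *v x)"

definition softmax_cols :: "real^'k^'k \<Rightarrow> real^'k^'k" where
  "softmax_cols B = (\<chi> i j. exp (B $ i $ j) / (\<Sum>l\<in>UNIV. exp (B $ l $ j)))"

definition clip_cols :: "real^'k^'m \<Rightarrow> real^'k^'m" where
  "clip_cols M = (\<chi> i j. M $ i $ j / max 1 (norm (column j M)))"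

definition attn_F :: "real^'r^'r \<Rightarrow> real^'r^'q \<Rightarrow> real^'k^'r \<Rightarrow> real^'k^'q" where
  "attn_F A V U = clip_cols ((V ** U) **
      softmax_cols ((1 / sqrt (real CARD('r))) *\<^sub>R (transpose U ** A ** U)))"

end

theory Submission
  imports Defs
begin

lemma fro_norm_eq_norm: "fro_norm M = norm M"
  unfolding fro_norm_def norm_vec_def L2_set_def
  by (simp add: real_sqrt_pow2 sum_nonneg)

lemma norm_sq_vec: "(norm (x::real^'n))^2 = (\<Sum>i\<in>UNIV. (x$i)^2)"
  unfolding norm_vec_def L2_set_def by (simp add: sum_nonneg)

lemma fro_sq_cols: "(fro_norm (M::real^'k^'m))^2 = (\<Sum>j\<in>UNIV. (norm (column j M))^2)"
  unfolding fro_norm_def norm_sq_vec column_def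
  by (simp add: sum_nonneg) (rule sum.swap)

lemma fro_cols_le:
  assumes "\<And>j. norm (column j (X::real^'k^'m)) \<le> norm (column j (Y::real^'k^'n))"
  shows "fro_norm X \<le> fro_norm Y"
proof -
  have "(fro_norm X)^2 \<le> (fro_norm Y)^2" unfolding fro_sq_cols
    by (intro sum_mono power_mono assms) simp
  thus ?thesis unfolding fro_norm_eq_norm by (simp add: power_mono_iff)
qed

lemma column_diff: "column j (X - Y) = column j X - column j Y"
  by (simp add: column_def vec_eq_iff)

lemma vec_lambda_has_derivative:
  fixes f :: "'a::real_normed_vector \<Rightarrow> real^'k"
  assumes "\<And>i. ((\<lambda>x. f x $ i) has_derivative (\<lambda>h. f' h $ i)) (at a within S)"
  shows "(f has_derivative f') (at a within S)"
proof (subst has_derivative_componentwise_within, intro ballI)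
  fix b :: "real^'k" assume "b \<in> Basis"
  then obtain i where b: "b = axis i 1" unfolding Basis_vec_def by auto
  have "((\<lambda>x. f x $ i) has_derivative (\<lambda>h. f' h $ i)) (at a within S)" by (rule assms)
  thus "((\<lambda>x. f x \<bullet> b) has_derivative (\<lambda>x. f' x \<bullet> b)) (at a within S)"
    unfolding b inner_axis by simp
qed
lemma column_mult: "column j (M ** N) = M *v column j N"
  by (simp add: column_def matrix_matrix_mult_def matrix_vector_mult_def vec_eq_iff)

lemma mv_op: "norm (M *v (c::real^'n)) \<le> op_norm (M::real^'n^'m) * norm c"
  unfolding op_norm_def by (rule onorm) simp

lemma mv_fro: "norm (M *v (c::real^'n)) \<le> fro_norm (M::real^'n^'m) * norm c"
proof -
  have "(norm (M *v c))^2 = (\<Sum>i\<in>UNIV. ((M$i) \<bullet> c)^2)"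
    by (simp add: norm_sq_vec matrix_vector_mul_component)
  also have "\<dots> \<le> (\<Sum>i\<in>UNIV. (norm (M$i))^2 * (norm c)^2)"
  proof (rule sum_mono)
    fix i
    have "\<bar>(M$i) \<bullet> c\<bar> \<le> norm (M$i) * norm c" by (rule Cauchy_Schwarz_ineq2)
    hence "\<bar>(M$i) \<bullet> c\<bar>^2 \<le> (norm (M$i) * norm c)^2" by (rule power_mono) simp
    thus "((M$i) \<bullet> c)^2 \<le> (norm (M$i))^2 * (norm c)^2" by (simp add: power_mult_distrib)
  qed
  also have "\<dots> = (norm M * norm c)^2"
    by (simp add: power_mult_distrib sum_distrib_right[symmetric] norm_vec_def L2_set_def sum_nonneg)
  finally have "(norm (M *v c))^2 \<le> (norm M * norm c)^2" .
  thus ?thesis unfolding fro_norm_eq_norm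
    by (rule power2_le_imp_le) simp
qed

lemma op_le_fro: "op_norm (M::real^'n^'m) \<le> fro_norm M"
  unfolding op_norm_def by (rule onorm_le) (rule mv_fro)

lemma op_nonneg: "0 \<le> op_norm (M::real^'n^'m)"
  unfolding op_norm_def by (rule onorm_pos_le) simp

lemma fro_mult_op: "fro_norm ((M::real^'n^'m) ** (N::real^'k^'n)) \<le> op_norm M * fro_norm N"
proof -
  have "(fro_norm (M ** N))^2 \<le> (op_norm M * fro_norm N)^2"
    unfolding fro_sq_cols column_mult power_mult_distrib sum_distrib_left
  proof (rule sum_mono)
    fix j
    have "norm (M *v column j N) ^ 2 \<le> (op_norm M * norm (column j N))^2"
      by (rule power_mono[OF mv_op]) simp
    thus "norm (M *v column j N) ^ 2 \<le> (op_norm M)^2 * (norm (column j N))^2"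
      by (simp add: power_mult_distrib)
  qed
  thus ?thesis by (rule power2_le_imp_le) (simp add: op_nonneg fro_norm_eq_norm)
qed

lemma fro_mult_fro: "fro_norm ((M::real^'n^'m) ** (N::real^'k^'n)) \<le> fro_norm M * fro_norm N"
proof -
  have "op_norm M * fro_norm N \<le> fro_norm M * fro_norm N"
    by (rule mult_right_mono[OF op_le_fro]) (simp add: fro_norm_eq_norm)
  thus ?thesis using fro_mult_op[of M N] by linarith
qed

lemma fro_transpose: "fro_norm (transpose M) = fro_norm (M::real^'n^'m)"
  unfolding fro_norm_def transpose_def by simp (rule sum.swap)

lemma fro_sq_le_card:
  assumes "\<And>j. norm (column j (M::real^'k^'m)) \<le> 1"
  shows "(fro_norm M)^2 \<le> real CARD('k)"
proof -
  have "(fro_norm M)^2 \<le> (\<Sum>j\<in>(UNIV::'k set). 1)" unfolding fro_sq_cols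
    by (intro sum_mono) (simp add: assms power_le_one)
  thus ?thesis by simp
qed

definition cl :: "real^'m \<Rightarrow> real^'m" where
  "cl x = (1 / max 1 (norm x)) *\<^sub>R x"

lemma cl_closest: "cl (x::real^'m) = closest_point (cball 0 1) x"
proof (rule closest_point_unique)
  show "cl x \<in> cball 0 1"
    by (auto simp: cl_def max_def norm_mult divide_simps)
  show "\<forall>z\<in>cball 0 1. dist x (cl x) \<le> dist x z"
  proof
    fix z :: "real^'m" assume z: "z \<in> cball 0 1"
    show "dist x (cl x) \<le> dist x z"
    proof (cases "norm x \<le> 1")
      case True thus ?thesis by (simp add: cl_def max_def)
    next
      case False
      hence "x - cl x = (1 - 1 / norm x) *\<^sub>R x" by (simp add: cl_def max_def algebra_simps)
      moreover have "0 \<le> 1 - 1 / norm x" using False by (simp add: divide_le_eq_1)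
      moreover have x0: "x \<noteq> 0" using False by (metis norm_zero zero_le_one)
      ultimately have "dist x (cl x) = (1 - 1/norm x) * norm x"
        by (simp add: dist_norm)
      also have "\<dots> = norm x - 1" using x0 by (simp add: field_simps)
      also have "\<dots> \<le> norm x - norm z" using z by simp
      also have "\<dots> \<le> dist x z" by (simp add: dist_norm norm_triangle_ineq2)
      finally show ?thesis .
    qed
  qed
qed auto

lemma cl_lip: "norm (cl x - cl y) \<le> norm (x - (y::real^'m))"
  using closest_point_lipschitz[of "cball (0::real^'m) 1" x y]
  by (simp add: cl_closest dist_norm)

lemma column_clip: "column j (clip_cols M) = cl (column j M)"
  by (simp add: column_def clip_cols_def cl_def vec_eq_iff)

lemma fro_clip: "fro_norm (clip_cols X - clip_cols Y) \<le> fro_norm (X - Y)"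
  by (rule fro_cols_le) (simp add: column_diff column_clip cl_lip)

definition sm :: "real^'k \<Rightarrow> real^'k" where
  "sm x = (\<chi> i. exp (x$i) / (\<Sum>l\<in>UNIV. exp (x$l)))"

definition sm' :: "real^'k \<Rightarrow> real^'k \<Rightarrow> real^'k" where
  "sm' x h = (\<chi> i. sm x $ i * (h$i - (\<Sum>l\<in>UNIV. sm x $ l * h$l)))"

lemma sum_exp_pos: "0 < (\<Sum>l\<in>UNIV. exp ((x::real^'k)$l))"
  by (rule sum_pos) auto

lemma sm_nonneg: "0 \<le> sm x $ i"
  using sum_exp_pos[of x] by (simp add: sm_def)

lemma sm_sum: "(\<Sum>i\<in>UNIV. sm x $ i) = 1"
  using sum_exp_pos[of x] by (simp add: sm_def sum_divide_distrib[symmetric])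

lemma sm_le1: "sm x $ i \<le> 1"
proof -
  have "sm x $ i \<le> (\<Sum>i\<in>UNIV. sm x $ i)"
    by (rule member_le_sum) (auto simp: sm_nonneg)
  thus ?thesis by (simp add: sm_sum)
qed

lemma alg_aux: "0 < (s::real) \<Longrightarrow> a / s * (b - T / s) = (b * a * s - a * T) / (s * s)"
  by (simp add: field_simps)

lemma sm_comp: fixes x :: "real^'k" shows "((\<lambda>x. sm x $ i) has_derivative (\<lambda>h. sm' x h $ i)) (at x within S)"
proof -
  define s where "s = (\<Sum>l\<in>UNIV. exp (x$l))"
  have pos: "0 < s" unfolding s_def by (rule sum_exp_pos)
  have nth: "\<And>l. ((\<lambda>x::real^'k. x$l) has_derivative (\<lambda>h. h$l)) (at x within S)"
    by (rule bounded_linear_imp_has_derivative[OF bounded_linear_vec_nth])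
  have e: "\<And>l. ((\<lambda>x::real^'k. exp (x$l)) has_derivative (\<lambda>h. h$l * exp (x$l))) (at x within S)"
    by (rule has_derivative_exp[OF nth])
  have se: "((\<lambda>x::real^'k. \<Sum>l\<in>UNIV. exp (x$l)) has_derivative (\<lambda>h. \<Sum>l\<in>UNIV. h$l * exp (x$l))) (at x within S)"
    by (rule has_derivative_sum) (rule e)
  have d: "((\<lambda>x::real^'k. exp (x$i) / (\<Sum>l\<in>UNIV. exp (x$l))) has_derivative
     (\<lambda>h. (h$i * exp (x$i) * s - exp (x$i) * (\<Sum>l\<in>UNIV. h$l * exp (x$l))) / (s * s))) (at x within S)"
    unfolding s_def by (rule has_derivative_divide'[OF e se]) (use pos in \<open>simp only: s_def\<close>)
  have eq: "(h$i * exp (x$i) * s - exp (x$i) * (\<Sum>l\<in>UNIV. h$l * exp (x$l))) / (s * s) = exp (x$i) / s * (h$i - (\<Sum>l\<in>UNIV. exp (x$l) / s * h$l))" for h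
  proof -
    have h2: "(\<Sum>l\<in>UNIV. exp (x$l) / s * h$l) = (\<Sum>l\<in>UNIV. h$l * exp (x$l)) / s"
      by (simp add: sum_divide_distrib mult.commute)
    show ?thesis unfolding h2 using alg_aux[OF pos] by simp
  qed
  have smv: "\<And>l. sm x $ l = exp (x$l) / s" by (simp add: sm_def s_def)
  have h1: "sm' x h $ i = exp (x$i) / s * (h$i - (\<Sum>l\<in>UNIV. exp (x$l) / s * h$l))" for h
    by (simp only: sm'_def vec_lambda_beta smv)
  have f: "(\<lambda>x. sm x $ i) = (\<lambda>x::real^'k. exp (x$i) / (\<Sum>l\<in>UNIV. exp (x$l)))"
    by (rule ext) (simp only: sm_def vec_lambda_beta)
  have g: "(\<lambda>h. sm' x h $ i) = (\<lambda>h. (h$i * exp (x$i) * s - exp (x$i) * (\<Sum>l\<in>UNIV. h$l * exp (x$l))) / (s * s))"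
    by (rule ext) (simp only: h1 eq)
  show ?thesis
    unfolding f g by (rule d)
qed

lemma sm_deriv: "((sm :: real^'k \<Rightarrow> real^'k) has_derivative sm' x) (at x within S)"
  by (rule vec_lambda_has_derivative) (rule sm_comp)

lemma key_ineq:
  fixes p h :: "'k::finite \<Rightarrow> real"
  assumes p0: "\<And>i. 0 \<le> p i" and p1: "\<And>i. p i \<le> 1" and ps: "(\<Sum>i\<in>UNIV. p i) = 1"
  shows "(\<Sum>i\<in>UNIV. (p i * (h i - (\<Sum>l\<in>UNIV. p l * h l)))^2) \<le> (\<Sum>i\<in>UNIV. (h i)^2)"
proof -
  define m where "m = (\<Sum>l\<in>UNIV. p l * h l)"
  have "(\<Sum>i\<in>UNIV. (p i * (h i - m))^2) \<le> (\<Sum>i\<in>UNIV. p i * (h i - m)^2)"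
  proof (rule sum_mono)
    fix i
    have "(p i)^2 \<le> p i" using p0[of i] p1[of i] by (simp add: power2_eq_square mult_left_le)
    hence "(p i)^2 * (h i - m)^2 \<le> p i * (h i - m)^2" by (rule mult_right_mono) simp
    thus "(p i * (h i - m))^2 \<le> p i * (h i - m)^2" by (simp add: power_mult_distrib)
  qed
  also have "(\<Sum>i\<in>UNIV. p i * (h i - m)^2) = (\<Sum>i\<in>UNIV. p i * (h i)^2) - 2 * m * (\<Sum>i\<in>UNIV. p i * h i) + m^2 * (\<Sum>i\<in>UNIV. p i)"
    by (simp add: power2_diff algebra_simps sum.distrib sum_subtractf sum_distrib_left sum_distrib_right)
  also have "\<dots> = (\<Sum>i\<in>UNIV. p i * (h i)^2) - m^2" by (simp add: ps m_def[symmetric] power2_eq_square)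
  also have "\<dots> \<le> (\<Sum>i\<in>UNIV. (h i)^2)"
  proof -
    have "(\<Sum>i\<in>UNIV. p i * (h i)^2) \<le> (\<Sum>i\<in>UNIV. (h i)^2)"
      by (rule sum_mono, rule mult_left_le_one_le) (simp_all add: p0 p1)
    moreover have "0 \<le> m^2" by simp
    ultimately show ?thesis by linarith
  qed
  finally show ?thesis unfolding m_def .
qed

lemma sm'_bound: "norm (sm' x h) \<le> 1 * norm h"
proof -
  have "(norm (sm' x h))^2 \<le> (norm h)^2"
    unfolding norm_sq_vec sm'_def vec_lambda_beta
    by (rule key_ineq[of "\<lambda>i. sm x $ i"]) (simp_all add: sm_nonneg sm_le1 sm_sum)
  thus ?thesis by simp
qed

lemma sm_norm: "norm (sm x) \<le> 1"
proof -
  have "(norm (sm x))^2 \<le> (\<Sum>i\<in>UNIV. sm x $ i)" unfolding norm_sq_vec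
    by (rule sum_mono) (simp add: power2_eq_square mult_left_le_one_le sm_nonneg sm_le1)
  thus ?thesis by (simp add: sm_sum power_le_one_iff)
qed

lemma sm_lip: "norm (sm x - sm y) \<le> norm (x - (y::real^'k))"
proof -
  have "norm (sm x - sm y) \<le> 1 * norm (x - y)"
  proof (rule differentiable_bound[of UNIV sm sm'])
    show "\<And>z. z \<in> UNIV \<Longrightarrow> onorm (sm' z) \<le> 1"
      by (rule onorm_le) (rule sm'_bound)
    show "convex (UNIV::(real^'k) set)" by simp
    show "\<And>z. z \<in> UNIV \<Longrightarrow> (sm has_derivative sm' z) (at z within UNIV)" by (rule sm_deriv)
  qed simp_all
  thus ?thesis by simp
qed

lemma column_softmax: "column j (softmax_cols B) = sm (column j B)"
  by (simp add: column_def softmax_cols_def sm_def vec_eq_iff)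

lemma fro_softmax: "fro_norm (softmax_cols B - softmax_cols B') \<le> fro_norm (B - B')"
  by (rule fro_cols_le) (simp add: column_diff column_softmax sm_lip)

lemma fro_softmax_sq: "(fro_norm (softmax_cols (B::real^'k^'k)))^2 \<le> real CARD('k)"
  by (rule fro_sq_le_card) (simp add: column_softmax sm_norm)


lemma mm_diff_l: "(A::real^'n^'m) ** (B - C) = A ** B - A ** (C::real^'k^'n)"
  by (simp add: matrix_matrix_mult_def vec_eq_iff sum_subtractf algebra_simps)

lemma mm_diff_r: "((A::real^'n^'m) - B) ** (C::real^'k^'n) = A ** C - B ** C"
  by (simp add: matrix_matrix_mult_def vec_eq_iff sum_subtractf algebra_simps)

lemma transpose_diff: "transpose ((A::real^'n^'m) - B) = transpose A - transpose B"
  by (simp add: transpose_def vec_eq_iff)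

lemma sq_mono: "0 \<le> (x::real) \<Longrightarrow> x \<le> y \<Longrightarrow> x^2 \<le> y^2"
  by (rule power_mono) simp_all

theorem mainTheorem13:
  fixes A :: "real^'r^'r" and V :: "real^'r^'q" and U U' :: "real^'k^'r"
  assumes "\<And>j. norm (column j U) \<le> 1"
    and "\<And>j. norm (column j U') \<le> 1"
  shows "(fro_norm (attn_F A V U - attn_F A V U'))^2
    \<le> 2 * real CARD('k) * (op_norm V)^2
        * (1 + 4 * real CARD('k) * (op_norm A)^2 / real CARD('r))
        * (fro_norm (U - U'))^2"
proof -
  define c where "c = 1 / sqrt (real CARD('r))"
  define X where "X = transpose U ** A ** U"
  define X' where "X' = transpose U' ** A ** U'"
  define S where "S = softmax_cols (c *\<^sub>R X)"
  define S' where "S' = softmax_cols (c *\<^sub>R X')"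
  define D where "D = U - U'"
  define K where "K = real CARD('k)"
  define u where "u = fro_norm D"
  define oA where "oA = op_norm A"
  define oV where "oV = op_norm V"
  have c0: "0 \<le> c" unfolding c_def by simp
  have c2: "c^2 = 1 / real CARD('r)" unfolding c_def by (simp add: power_divide)
  have u0: "0 \<le> u" unfolding u_def by (simp add: fro_norm_eq_norm)
  have oA0: "0 \<le> oA" unfolding oA_def by (rule op_nonneg)
  have oV0: "0 \<le> oV" unfolding oV_def by (rule op_nonneg)
  have K0: "0 \<le> K" unfolding K_def by simp
  have fU: "(fro_norm U)^2 \<le> K" unfolding K_def by (rule fro_sq_le_card) (rule assms(1))
  have fU': "(fro_norm U')^2 \<le> K" unfolding K_def by (rule fro_sq_le_card) (rule assms(2))
  have fU1: "fro_norm U \<le> sqrt K" using fU by (simp add: real_le_rsqrt fro_norm_eq_norm)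
  have fU1': "fro_norm U' \<le> sqrt K" using fU' by (simp add: real_le_rsqrt fro_norm_eq_norm)
  have fS: "(fro_norm S)^2 \<le> K" unfolding K_def S_def by (rule fro_softmax_sq)
  have F: "attn_F A V U - attn_F A V U' = clip_cols ((V ** U) ** S) - clip_cols ((V ** U') ** S')"
    unfolding attn_F_def S_def S'_def X_def X'_def c_def by simp
  have step1: "fro_norm (attn_F A V U - attn_F A V U') \<le> fro_norm ((V ** U) ** S - (V ** U') ** S')"
    unfolding F by (rule fro_clip)
  have e1: "(V ** U) ** S - (V ** U') ** S' = V ** (U ** S - U' ** S')"
    by (simp add: matrix_mul_assoc mm_diff_l)
  have e2: "U ** S - U' ** S' = D ** S + U' ** (S - S')"
    unfolding D_def mm_diff_l mm_diff_r by simp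
  define a where "a = fro_norm (D ** S)"
  define b where "b = fro_norm (U' ** (S - S'))"
  have a0: "0 \<le> a" unfolding a_def by (simp add: fro_norm_eq_norm)
  have b0: "0 \<le> b" unfolding b_def by (simp add: fro_norm_eq_norm)
  have step2: "fro_norm (attn_F A V U - attn_F A V U') \<le> oV * (a + b)"
  proof -
    have "fro_norm (V ** (U ** S - U' ** S')) \<le> oV * fro_norm (U ** S - U' ** S')"
      unfolding oV_def by (rule fro_mult_op)
    also have "fro_norm (U ** S - U' ** S') \<le> a + b"
      unfolding e2 a_def b_def fro_norm_eq_norm by (rule norm_triangle_ineq)
    hence "oV * fro_norm (U ** S - U' ** S') \<le> oV * (a + b)" using oV0 by (rule mult_left_mono)
    finally show ?thesis using step1 e1 by simp
  qed
  have a2: "a^2 \<le> K * u^2"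
  proof -
    have "a \<le> u * fro_norm S" unfolding a_def u_def by (rule fro_mult_fro)
    hence "a^2 \<le> (u * fro_norm S)^2" by (rule sq_mono[OF a0])
    also have "\<dots> = u^2 * (fro_norm S)^2" by (simp add: power_mult_distrib)
    also have "\<dots> \<le> u^2 * K" using fS by (rule mult_left_mono) simp
    finally show ?thesis by (simp add: mult.commute)
  qed
  have eX: "X - X' = transpose D ** A ** U + transpose U' ** A ** D"
    unfolding X_def X'_def D_def transpose_diff mm_diff_l mm_diff_r by simp
  have xx: "fro_norm (X - X') \<le> 2 * sqrt K * oA * u"
  proof -
    have t1: "fro_norm (transpose D ** A ** U) \<le> sqrt K * oA * u"
    proof -
      have "fro_norm (transpose D ** (A ** U)) \<le> fro_norm (transpose D) * fro_norm (A ** U)"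
        by (rule fro_mult_fro)
      also have "\<dots> \<le> u * (oA * fro_norm U)"
        unfolding fro_transpose u_def[symmetric] oA_def[symmetric]
        by (rule mult_left_mono[OF _ u0]) (unfold oA_def, rule fro_mult_op)
      also have "\<dots> \<le> u * (oA * sqrt K)"
        using fU1 by (intro mult_left_mono u0 oA0)
      finally show ?thesis by (simp add: matrix_mul_assoc mult_ac)
    qed
    have t2: "fro_norm (transpose U' ** A ** D) \<le> sqrt K * oA * u"
    proof -
      have "fro_norm (transpose U' ** (A ** D)) \<le> fro_norm (transpose U') * fro_norm (A ** D)"
        by (rule fro_mult_fro)
      also have "\<dots> \<le> sqrt K * (oA * u)"
        unfolding fro_transpose u_def oA_def
        by (rule mult_mono[OF fU1' fro_mult_op]) (simp_all add: fro_norm_eq_norm K0)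
      finally show ?thesis by (simp add: matrix_mul_assoc mult_ac)
    qed
    have "fro_norm (X - X') \<le> fro_norm (transpose D ** A ** U) + fro_norm (transpose U' ** A ** D)"
      unfolding eX fro_norm_eq_norm by (rule norm_triangle_ineq)
    thus ?thesis using t1 t2 by linarith
  qed
  have ss: "fro_norm (S - S') \<le> c * (2 * sqrt K * oA * u)"
  proof -
    have "fro_norm (S - S') \<le> fro_norm (c *\<^sub>R X - c *\<^sub>R X')"
      unfolding S_def S'_def by (rule fro_softmax)
    also have "\<dots> = c * fro_norm (X - X')"
      using c0 by (simp add: fro_norm_eq_norm scaleR_diff_right[symmetric])
    also have "\<dots> \<le> c * (2 * sqrt K * oA * u)" using xx c0 by (rule mult_left_mono)
    finally show ?thesis .
  qed
  have b2: "b^2 \<le> K * (4 * K * oA^2 / real CARD('r)) * u^2"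
  proof -
    have ss0: "0 \<le> fro_norm (S - S')" by (simp add: fro_norm_eq_norm)
    have "b \<le> fro_norm U' * fro_norm (S - S')" unfolding b_def by (rule fro_mult_fro)
    hence "b^2 \<le> (fro_norm U' * fro_norm (S - S'))^2" by (rule sq_mono[OF b0])
    also have "\<dots> = (fro_norm U')^2 * (fro_norm (S - S'))^2" by (simp add: power_mult_distrib)
    also have "\<dots> \<le> K * (c * (2 * sqrt K * oA * u))^2"
      by (rule mult_mono[OF fU' sq_mono[OF ss0 ss]]) (simp_all add: K0)
    also have "\<dots> = K * (4 * K * oA^2 / real CARD('r)) * u^2"
      using K0 by (simp add: power_mult_distrib c2)
    finally show ?thesis .
  qed
  have "(fro_norm (attn_F A V U - attn_F A V U'))^2 \<le> (oV * (a + b))^2"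
    by (rule sq_mono[OF _ step2]) (simp add: fro_norm_eq_norm)
  also have "\<dots> = oV^2 * (a + b)^2" by (simp add: power_mult_distrib)
  also have "\<dots> \<le> oV^2 * (2 * a^2 + 2 * b^2)"
  proof (rule mult_left_mono)
    have "0 \<le> (a - b)^2" by simp
    thus "(a + b)^2 \<le> 2 * a^2 + 2 * b^2" by (simp add: power2_eq_square algebra_simps)
  qed simp
  also have "\<dots> \<le> oV^2 * (2 * (K * u^2) + 2 * (K * (4 * K * oA^2 / real CARD('r)) * u^2))"
    using a2 b2 by (intro mult_left_mono) simp_all
  also have "\<dots> = 2 * K * oV^2 * (1 + 4 * K * oA^2 / real CARD('r)) * u^2"
    by (simp add: algebra_simps)
  finally show ?thesis unfolding K_def oV_def oA_def u_def D_def .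
qed

end
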